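(* For $\alpha\in\{1/4,-1/2\}$ and $j,k\in\mathbb{N}$ let $$\big(h_{\mathbb{N}}^{[\alpha]}\big)_{jk}=2^{1+2\alpha}\int_0^1\sin\Big(\frac{\pi x}{2}\Big)^{2\alpha}\sin(j\pi x)\sin(k\pi x)\,\mathrm{d}x.$$ Then for all $n\in\mathbb{N}$ and $j,k\in\{1,\dots,n\}$: (i) $\displaystyle\big(h_{\mathbb{N}}^{[1/4]}\big)_{jk}=\frac{1}{2\sqrt{2\pi}}\left(\frac{\Gamma(j+k-\frac14)}{\Gamma(j+k+\frac54)}-\frac{\Gamma(|j-k|-\frac14)}{\Gamma(|j-k|+\frac54)}\right)$; (ii) $\displaystyle\big(h_{\mathbb{N}}^{[-1/2]}\big)_{jk}=\frac1\pi\Big[\psi\big(j+k+\tfrac12\big)-\psi\big(|j-k|+\tfrac12\big)\Big]=\frac1\pi\sum_{l=|j-k|+1}^{j+k}\frac{2}{2l-1}$, where $\Gamma$ is the Gamma function and $\psi=\Gamma'/\Gamma$ is the digamma function. *)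

theory Defs
  imports "HOL-Analysis.Analysis"
begin

text \<open>The real power is taken with powr (sin(pi x/2) > 0 on (0,1]; the value at the
  single point x = 0 is irrelevant for the integral).\<close>
definition hN :: "real \<Rightarrow> nat \<Rightarrow> nat \<Rightarrow> real" where
  "hN \<alpha> j k = 2 powr (1 + 2 * \<alpha>) *
     integral {0..1} (\<lambda>x. sin (pi * x / 2) powr (2 * \<alpha>) * sin (real j * pi * x) * sin (real k * pi * x))"

end

theory Submission
  imports Defs
begin

lemma digamma_sum:
  fixes m d :: nat
  shows "Digamma (real (m+d) + 1/2) - Digamma (real m + 1/2) = (\<Sum>l = m+1 .. m+d. 2 / (2 * real l - 1))"
proof (induction d)
  case 0
  then show ?case by simp
next
  case (Suc d)
  have "Digamma (real (m + Suc d) + 1/2) = Digamma ((real (m+d) + 1/2) + 1)"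
    by (simp add: algebra_simps)
  also have "\<dots> = Digamma (real (m+d) + 1/2) + 1 / (real (m+d) + 1/2)"
  proof (rule Digamma_plus1)
    have "real (m+d) \<ge> 0" by simp
    then show "real (m+d) + 1/2 \<noteq> 0" by linarith
  qed
  finally have "Digamma (real (m + Suc d) + 1/2) = Digamma (real (m+d) + 1/2) + 1 / (real (m+d) + 1/2)" .
  moreover have "(\<Sum>l = m+1 .. m+Suc d. 2 / (2 * real l - 1)) = (\<Sum>l = m+1 .. m+d. 2 / (2 * real l - 1)) + 2 / (2 * real (m + Suc d) - 1)"
    by (simp add: add_ac)
  moreover have "2 / (2 * real (m + Suc d) - 1) = 1 / (real (m+d) + 1/2)"
    by (simp add: field_simps)
  ultimately show ?case using Suc.IH by simp
qed

lemma sin_odd_half_int: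
  fixes l :: nat and x :: real
  assumes "l \<ge> 1"
  shows "((\<lambda>x. sin ((2 * real l - 1) * pi * x / 2)) has_integral (2 / ((2 * real l - 1) * pi))) {0..1}"
proof -
  define c where "c = (2 * real l - 1) * pi / 2"
  have c0: "c > 0" using assms by (simp add: c_def)
  have "((\<lambda>x. sin (c * x)) has_integral ((- cos (c * 1) / c) - (- cos (c * 0) / c))) {0..1}"
    apply (rule fundamental_theorem_of_calculus)
     apply simp
    using c0 by (auto intro!: derivative_eq_intros simp: has_real_derivative_iff_has_vector_derivative[symmetric] field_simps)
  moreover have "cos c = 0"
  proof -
    have "c = real l * pi - pi / 2" unfolding c_def by (simp add: field_simps)
    then show ?thesis by (simp add: cos_diff)
  qed
  ultimately show ?thesis by (simp add: c_def algebra_simps)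
qed

lemma cos_tele:
  fixes x :: real and m d :: nat
  shows "cos (real m * pi * x) - cos (real (m+d) * pi * x) = 2 * sin (pi * x / 2) * (\<Sum>l = m+1 .. m+d. sin ((2 * real l - 1) * pi * x / 2))"
proof (induction d)
  case 0
  then show ?case by simp
next
  case (Suc d)
  define A where "A = (2 * real (m + Suc d) - 1) * pi * x / 2"
  define B where "B = pi * x / 2"
  have 1: "real (m+d) * pi * x = A - B" unfolding A_def B_def by (simp add: field_simps)
  have 2: "real (m + Suc d) * pi * x = A + B" unfolding A_def B_def by (simp add: field_simps)
  have "cos (real (m+d) * pi * x) - cos (real (m + Suc d) * pi * x) = 2 * sin A * sin B"
    unfolding 1 2 by (simp add: cos_diff cos_add)
  moreover have "(\<Sum>l = m+1 .. m+Suc d. sin ((2 * real l - 1) * pi * x / 2)) = (\<Sum>l = m+1 .. m+d. sin ((2 * real l - 1) * pi * x / 2)) + sin A"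
    by (simp add: add_ac A_def)
  ultimately show ?case using Suc.IH unfolding B_def by (simp add: algebra_simps)
qed

lemma prod_sin:
  fixes j k :: nat and x :: real
  assumes "x \<ge> 0"
  shows "sin (real j * pi * x) * sin (real k * pi * x) = (cos (real (nat \<bar>int j - int k\<bar>) * pi * x) - cos (real (j+k) * pi * x)) / 2"
proof -
  have "cos (real (nat \<bar>int j - int k\<bar>) * pi * x) = cos ((real j - real k) * pi * x)"
  proof (cases "j \<le> k")
    case True
    then have "real (nat \<bar>int j - int k\<bar>) = - (real j - real k)" by auto
    then show ?thesis by (metis cos_minus mult_minus_left)
  next
    case False
    then have "real (nat \<bar>int j - int k\<bar>) = (real j - real k)" by auto
    then show ?thesis by simp
  qed
  moreover have "real j * pi * x = real j * pi * x" ..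
  ultimately show ?thesis
    by (simp add: algebra_simps cos_diff cos_add)
qed

lemma partii:
  fixes j k :: nat
  assumes "j \<ge> 1" "k \<ge> 1"
  shows "hN (-1/2) j k = 1 / pi * (\<Sum>l = nat \<bar>int j - int k\<bar> + 1 .. j + k. 2 / (2 * real l - 1))"
proof -
  define m where "m = nat \<bar>int j - int k\<bar>"
  define d where "d = 2 * min j k"
  have Md: "j + k = m + d" unfolding m_def d_def by auto
  have pw: "sin (pi * x / 2) powr (2 * (-1/2)) * sin (real j * pi * x) * sin (real k * pi * x)
      = (\<Sum>l = m+1 .. j+k. sin ((2 * real l - 1) * pi * x / 2))" if x: "x \<in> {0..1}" for x
  proof (cases "x = 0")
    case True
    then show ?thesis by simp
  next
    case False
    with x have "0 < x" "x \<le> 1" by auto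
    then have sp: "sin (pi * x / 2) > 0" by (intro sin_gt_zero) auto
    have "sin (pi * x / 2) powr (2 * (-1/2)) = 1 / sin (pi * x / 2)"
      using sp by (simp add: powr_minus_divide)
    moreover have "sin (real j * pi * x) * sin (real k * pi * x) = sin (pi * x / 2) * (\<Sum>l = m+1 .. j+k. sin ((2 * real l - 1) * pi * x / 2))"
      using prod_sin[of x j k] cos_tele[of m x d] \<open>0 < x\<close> unfolding m_def[symmetric] Md by simp
    ultimately show ?thesis using sp by simp
  qed
  have "((\<lambda>x. \<Sum>l = m+1 .. j+k. sin ((2 * real l - 1) * pi * x / 2)) has_integral (\<Sum>l = m+1 .. j+k. 2 / ((2 * real l - 1) * pi))) {0..1}"
    by (intro has_integral_sum) (auto intro!: sin_odd_half_int)
  then have "integral {0..1} (\<lambda>x. sin (pi * x / 2) powr (2 * (-1/2)) * sin (real j * pi * x) * sin (real k * pi * x)) = (\<Sum>l = m+1 .. j+k. 2 / ((2 * real l - 1) * pi))"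
    using pw by (subst integral_cong[OF pw]) (auto simp: integral_unique)
  then show ?thesis unfolding hN_def m_def[symmetric]
    by (simp add: sum_distrib_left mult_ac)
qed


definition Ic :: "nat \<Rightarrow> real" where
  "Ic m = integral {0..1} (\<lambda>x. sqrt (sin (pi * x / 2)) * cos (real m * pi * x))"

lemma integrable_Ic: "(\<lambda>x. sqrt (sin (pi * x / 2)) * cos (real m * pi * x)) integrable_on {0..1}"
  by (intro integrable_continuous_interval) (auto intro!: continuous_intros)

lemma deriv_G:
  fixes m :: nat and x :: real
  assumes "0 < x" "x < 1"
  shows "((\<lambda>x. sin (pi * x / 2) * sqrt (sin (pi * x / 2)) * cos ((2 * real m + 1) * pi * x / 2))
     has_real_derivative
       (pi / 2 * (sqrt (sin (pi * x / 2)) * ((real m + 5/4) * cos (real (Suc m) * pi * x) + (1/4 - real m) * cos (real m * pi * x))))) (at x)"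
proof -
  define s where "s = sin (pi * x / 2)"
  define c where "c = cos (pi * x / 2)"
  define u where "u = (2 * real m + 1) * pi * x / 2"
  have sp: "s > 0" unfolding s_def using assms by (intro sin_gt_zero) auto
  have ss: "sqrt s * sqrt s = s" using sp by simp
  have D: "((\<lambda>x. sin (pi * x / 2) * sqrt (sin (pi * x / 2)) * cos ((2 * real m + 1) * pi * x / 2))
     has_real_derivative
       ((c * (pi / 2) * sqrt s + s * (c * (pi / 2) / (2 * sqrt s))) * cos u - s * sqrt s * (sin u * ((2 * real m + 1) * pi / 2)))) (at x)"
    unfolding s_def c_def u_def using sp[unfolded s_def]
    by (auto intro!: derivative_eq_intros simp: field_simps)
  have e1: "real (Suc m) * pi * x = u + pi * x / 2" unfolding u_def by (simp add: field_simps)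
  have e2: "real m * pi * x = u - pi * x / 2" unfolding u_def by (simp add: field_simps)
  have "(c * (pi / 2) * sqrt s + s * (c * (pi / 2) / (2 * sqrt s))) * cos u - s * sqrt s * (sin u * ((2 * real m + 1) * pi / 2))
     = pi / 2 * sqrt s * (3/2 * c * cos u - (2 * real m + 1) * s * sin u)"
    using sp ss by (simp add: field_simps) (metis ss mult.commute)?
  also have "\<dots> = pi / 2 * (sqrt s * ((real m + 5/4) * cos (real (Suc m) * pi * x) + (1/4 - real m) * cos (real m * pi * x)))"
    unfolding e1 e2 cos_add cos_diff s_def[symmetric] c_def[symmetric] by (simp add: algebra_simps) (simp add: field_simps)
  finally have eq: "(c * (pi / 2) * sqrt s + s * (c * (pi / 2) / (2 * sqrt s))) * cos u - s * sqrt s * (sin u * ((2 * real m + 1) * pi / 2))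
     = pi / 2 * (sqrt s * ((real m + 5/4) * cos (real (Suc m) * pi * x) + (1/4 - real m) * cos (real m * pi * x)))" .
  show ?thesis using D[unfolded eq] unfolding s_def .
qed

lemma Ic_rec: "(real m + 5/4) * Ic (Suc m) + (1/4 - real m) * Ic m = 0"
proof -
  define G where "G = (\<lambda>x. sin (pi * x / 2) * sqrt (sin (pi * x / 2)) * cos ((2 * real m + 1) * pi * x / 2))"
  define G' where "G' = (\<lambda>x. pi / 2 * (sqrt (sin (pi * x / 2)) * ((real m + 5/4) * cos (real (Suc m) * pi * x) + (1/4 - real m) * cos (real m * pi * x))))"
  have "(G' has_integral (G 1 - G 0)) {0..1}"
  proof (rule fundamental_theorem_of_calculus_interior_strong[of "{}"])
    show "continuous_on {0..1} G" unfolding G_def by (auto intro!: continuous_intros)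
    fix x :: real assume "x \<in> {0<..<1} - {}"
    then show "(G has_vector_derivative G' x) (at x)"
      unfolding G_def G'_def has_real_derivative_iff_has_vector_derivative[symmetric]
      by (intro deriv_G) auto
  qed auto
  moreover have "G 1 = 0"
  proof -
    have eq: "(2 * real m + 1) * pi / 2 = real (Suc m) * pi - pi / 2" by (simp add: field_simps)
    have c: "cos ((2 * real m + 1) * pi / 2) = 0" by (subst eq, subst cos_diff, simp only: sin_npi) simp
    then show ?thesis unfolding G_def by simp
  qed
  moreover have "G 0 = 0" unfolding G_def by simp
  ultimately have h0: "(G' has_integral 0) {0..1}" by simp
  have a: "((\<lambda>x. sqrt (sin (pi * x / 2)) * cos (real n * pi * x)) has_integral Ic n) {0..1}" for n
    unfolding Ic_def using integrable_Ic by (rule integrable_integral)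
  have "((\<lambda>x. pi / 2 * (real m + 5/4) * (sqrt (sin (pi * x / 2)) * cos (real (Suc m) * pi * x))
           + pi / 2 * (1/4 - real m) * (sqrt (sin (pi * x / 2)) * cos (real m * pi * x)))
        has_integral (pi / 2 * (real m + 5/4) * Ic (Suc m) + pi / 2 * (1/4 - real m) * Ic m)) {0..1}"
    by (intro has_integral_add has_integral_mult_right a)
  moreover have "(\<lambda>x. pi / 2 * (real m + 5/4) * (sqrt (sin (pi * x / 2)) * cos (real (Suc m) * pi * x))
           + pi / 2 * (1/4 - real m) * (sqrt (sin (pi * x / 2)) * cos (real m * pi * x))) = G'"
    unfolding G'_def by (auto simp: algebra_simps)
  ultimately have "pi / 2 * (real m + 5/4) * Ic (Suc m) + pi / 2 * (1/4 - real m) * Ic m = 0"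
    using h0 has_integral_unique by metis
  then have "pi / 2 * ((real m + 5/4) * Ic (Suc m) + (1/4 - real m) * Ic m) = 0"
    by (simp add: algebra_simps)
  then show ?thesis by simp
qed

lemma not_npi: "real m - 1/4 \<notin> \<int>\<^sub>\<le>\<^sub>0" "real m + 5/4 \<notin> \<int>\<^sub>\<le>\<^sub>0"
proof -
  show "real m - 1/4 \<notin> \<int>\<^sub>\<le>\<^sub>0"
  proof
    assume "real m - 1/4 \<in> \<int>\<^sub>\<le>\<^sub>0"
    then obtain n where "real m - 1/4 = - real n" by (auto elim!: nonpos_Ints_cases')
    then have "real (4 * m + 4 * n) = 1" by simp
    then have "4 * m + 4 * n = 1" by linarith
    then show False by presburger
  qed
  show "real m + 5/4 \<notin> \<int>\<^sub>\<le>\<^sub>0"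
  proof
    assume "real m + 5/4 \<in> \<int>\<^sub>\<le>\<^sub>0"
    then obtain n where "real m + 5/4 = - real n" by (auto elim!: nonpos_Ints_cases')
    then show False using of_nat_0_le_iff[of m] of_nat_0_le_iff[of n] by linarith
  qed
qed

lemma R_rec: "Gamma (real (Suc m) - 1/4) / Gamma (real (Suc m) + 5/4)
   = Gamma (real m - 1/4) / Gamma (real m + 5/4) * ((real m - 1/4) / (real m + 5/4))"
proof -
  have "Gamma (real (Suc m) - 1/4) = (real m - 1/4) * Gamma (real m - 1/4)"
    using Gamma_plus1[OF not_npi(1)[of m]] by (simp add: algebra_simps)
  moreover have "Gamma (real (Suc m) + 5/4) = (real m + 5/4) * Gamma (real m + 5/4)"
    using Gamma_plus1[OF not_npi(2)[of m]] by (simp add: algebra_simps)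
  ultimately show ?thesis by (simp add: mult.commute)
qed

definition fB :: "real \<Rightarrow> real" where "fB t = t powr (-1/4) * (1 - t) powr (-1/2)"
definition gS :: "real \<Rightarrow> real" where "gS x = (sin (pi * x / 2))^2"

lemma fB_int: "(fB has_integral Beta (3/4) (1/2)) {0..1}"
  using has_integral_Beta_real[of "3/4" "1/2"] unfolding fB_def by simp

lemma gS_mono: "0 \<le> c \<Longrightarrow> c \<le> d \<Longrightarrow> d \<le> 1 \<Longrightarrow> gS c \<le> gS d"
  unfolding gS_def
  by (intro power_mono sin_monotone_2pi_le) (auto intro!: sin_ge_zero order.trans[OF _ mult_nonneg_nonneg[of pi c]])

lemma gS_range: "0 \<le> x \<Longrightarrow> x \<le> 1 \<Longrightarrow> gS x \<in> {0..1}"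
  unfolding gS_def by (auto simp: abs_square_le_1 intro!: sin_ge_zero)

lemma gS_pos: "0 < x \<Longrightarrow> x < 1 \<Longrightarrow> 0 < gS x \<and> gS x < 1"
proof -
  assume x: "0 < x" "x < 1"
  have s: "0 < sin (pi * x / 2)" using x by (intro sin_gt_zero) auto
  have "sin (pi * x / 2) < 1"
  proof -
    have "sin (pi * x / 2) < sin (pi / 2)"
      using x by (intro sin_monotone_2pi) (auto intro!: order.trans[OF _ mult_nonneg_nonneg[of pi x]])
    then show ?thesis by simp
  qed
  with s show ?thesis unfolding gS_def by (simp add: power_less_one_iff)
qed

lemma subst_piece:
  assumes "0 < c" "c \<le> d" "d < 1"
  shows "((\<lambda>x. pi * sqrt (sin (pi * x / 2))) has_integral integral {gS c..gS d} fB) {c..d}"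
proof -
  define g' where "g' x = pi * sin (pi * x / 2) * cos (pi * x / 2)" for x
  have "((\<lambda>x. g' x *\<^sub>R fB (gS x)) has_integral integral {gS c..gS d} fB) {c..d}"
  proof (rule has_integral_substitution[where c = "gS c" and d = "gS d"])
    show "c \<le> d" by fact
    show "gS c \<le> gS d" using assms by (intro gS_mono) auto
    show "gS ` {c..d} \<subseteq> {gS c..gS d}" using assms by (auto intro!: gS_mono)
    have p: "0 < gS c" "gS d < 1" using gS_pos assms by auto
    show "continuous_on {gS c..gS d} fB"
      unfolding fB_def using p by (auto intro!: continuous_intros)
    fix x assume "x \<in> {c..d}"
    show "(gS has_real_derivative g' x) (at x within {c..d})"
      unfolding gS_def g'_def by (auto intro!: derivative_eq_intros)
  qed
  moreover have "g' x *\<^sub>R fB (gS x) = pi * sqrt (sin (pi * x / 2))" if x: "x \<in> {c..d}" for x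
  proof -
    define s where "s = sin (pi * x / 2)"
    define co where "co = cos (pi * x / 2)"
    have sp: "0 < s" unfolding s_def using x assms by (intro sin_gt_zero) auto
    have cp: "0 < co" unfolding co_def using x assms by (intro cos_gt_zero) auto
    have "1 - s^2 = co^2" unfolding s_def co_def by (simp add: cos_squared_eq)
    then have f: "fB (gS x) = (s^2) powr (-1/4) * (co^2) powr (-1/2)"
      unfolding fB_def gS_def s_def by simp
    have s2: "s^2 = s powr 2" using sp by simp
    have a: "(s^2) powr (-1/4) = inverse (sqrt s)"
    proof -
      have "(s^2) powr (-1/4) = s powr (2 * (-1/4))" unfolding s2 by (rule powr_powr)
      also have "\<dots> = s powr (- (1/2))" by simp
      also have "\<dots> = inverse (sqrt s)" unfolding powr_minus using sp by (simp add: powr_half_sqrt)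
      finally show ?thesis .
    qed
    have c2: "co^2 = co powr 2" using cp by simp
    have b: "(co^2) powr (-1/2) = inverse co"
    proof -
      have "(co^2) powr (-1/2) = co powr (2 * (-1/2))" unfolding c2 by (rule powr_powr)
      also have "\<dots> = co powr (- 1)" by simp
      also have "\<dots> = inverse co" unfolding powr_minus using cp by simp
      finally show ?thesis .
    qed
    have "sqrt s * sqrt s = s" using sp by simp
    have "g' x *\<^sub>R fB (gS x) = g' x * (inverse (sqrt s) * inverse co)"
      using f a b by simp
    also have "\<dots> = pi * s * co * inverse (sqrt s) * inverse co"
      unfolding g'_def s_def co_def by simp
    finally
    also have "\<dots> = pi * sqrt s"
    proof -
      have "pi * s * co * inverse (sqrt s) * inverse co = pi * (sqrt s * sqrt s) / sqrt s"
        using cp \<open>sqrt s * sqrt s = s\<close> by (simp add: field_simps)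
      also have "\<dots> = pi * sqrt s" using sp by (simp add: field_simps)
      finally show ?thesis .
    qed
    finally show ?thesis unfolding s_def .
  qed
  ultimately show ?thesis using has_integral_cong by (metis (no_types, lifting))
qed

lemma Ic0_pi: "pi * Ic 0 = Beta (3/4) (1/2)"
proof -
  define h where "h x = pi * sqrt (sin (pi * x / 2))" for x
  define F where "F u = integral {0..u} fB" for u
  define H where "H v = integral {0..v} h" for v
  have fBi: "fB integrable_on {0..1}" using fB_int by blast
  have hi: "h integrable_on {0..1}" unfolding h_def
    by (intro integrable_continuous_interval) (auto intro!: continuous_intros)
  have Fc: "continuous_on {0..1} F" unfolding F_def by (rule indefinite_integral_continuous_1[OF fBi])
  have Hc: "continuous_on {0..1} H" unfolding H_def by (rule indefinite_integral_continuous_1[OF hi])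
  have gc: "continuous_on {0..1} gS" unfolding gS_def by (auto intro!: continuous_intros)
  have gr: "gS ` {0..1} \<subseteq> {0..1}" using gS_range by auto
  have FG: "continuous_on {0..1} (\<lambda>x. F (gS x))" by (rule continuous_on_compose2[OF Fc gc gr])
  have key: "F (gS d) - F (gS c) = H d - H c" if "0 < c" "c \<le> d" "d < 1" for c d
  proof -
    have p1: "integral {gS c..gS d} fB = F (gS d) - F (gS c)"
    proof -
      have "0 \<le> gS c" "gS c \<le> gS d" "gS d \<le> 1" using that gS_range gS_mono by auto
      then have "fB integrable_on {0..gS d}" by (intro integrable_on_subinterval[OF fBi]) auto
      then have "integral {0..gS c} fB + integral {gS c..gS d} fB = integral {0..gS d} fB"
        by (rule Henstock_Kurzweil_Integration.integral_combine[OF \<open>0 \<le> gS c\<close> \<open>gS c \<le> gS d\<close>])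
      then show ?thesis unfolding F_def by simp
    qed
    have p2: "integral {c..d} h = H d - H c"
    proof -
      have "h integrable_on {0..d}" using that by (intro integrable_on_subinterval[OF hi]) auto
      moreover have "0 \<le> c" "c \<le> d" using that by auto
      ultimately have "integral {0..c} h + integral {c..d} h = integral {0..d} h"
        by (intro Henstock_Kurzweil_Integration.integral_combine)
      then show ?thesis unfolding H_def by simp
    qed
    have "integral {c..d} h = integral {gS c..gS d} fB"
      using subst_piece[OF that] unfolding h_def by (rule integral_unique)
    then show ?thesis using p1 p2 by simp
  qed
  define \<Phi> where "\<Phi> x = F (gS x) - H x" for x
  have \<Phi>c: "continuous_on (closure {0<..<1}) \<Phi>" unfolding \<Phi>_def using FG Hc by (auto intro!: continuous_intros)
  have \<Phi>k: "\<Phi> x = \<Phi> (1/2)" if "x \<in> {0<..<1}" for x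
  proof (cases "x \<ge> 1/2")
    case True
    then show ?thesis using key[of "1/2" x] that unfolding \<Phi>_def by auto
  next
    case False
    then show ?thesis using key[of x "1/2"] that unfolding \<Phi>_def by auto
  qed
  have "\<Phi> 1 = \<Phi> (1/2)" by (rule continuous_constant_on_closure[OF \<Phi>c \<Phi>k]) auto
  moreover have "\<Phi> 0 = \<Phi> (1/2)" by (rule continuous_constant_on_closure[OF \<Phi>c \<Phi>k]) auto
  ultimately have "\<Phi> 1 = \<Phi> 0" by simp
  moreover have "\<Phi> 0 = 0" unfolding \<Phi>_def F_def H_def gS_def by simp
  moreover have "gS 1 = 1" unfolding gS_def by simp
  ultimately have "F 1 = H 1" unfolding \<Phi>_def by simp
  moreover have "F 1 = Beta (3/4) (1/2)" unfolding F_def using fB_int by (rule integral_unique)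
  moreover have "H 1 = pi * Ic 0" unfolding H_def Ic_def h_def by simp
  ultimately show ?thesis by simp
qed

lemma Ic0: "Ic 0 = Gamma (3/4) / (sqrt pi * Gamma (5/4))"
proof -
  have "Beta (3/4) (1/2) = Gamma (3/4) * sqrt pi / Gamma (5/4)"
    unfolding Beta_def by (simp add: Gamma_one_half_real)
  then have e: "pi * Ic 0 = Gamma (3/4) * sqrt pi / Gamma (5/4)" using Ic0_pi by simp
  have "sqrt pi * (sqrt pi * Ic 0) = pi * Ic 0" by (simp add: mult.assoc[symmetric])
  also have "\<dots> = Gamma (3/4) * sqrt pi / Gamma (5/4)" by (rule e)
  also have "\<dots> = sqrt pi * (Gamma (3/4) / Gamma (5/4))" by (metis times_divide_eq_right mult.commute)
  finally have "sqrt pi * (sqrt pi * Ic 0) = sqrt pi * (Gamma (3/4) / Gamma (5/4))" .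
  then have "sqrt pi * Ic 0 = Gamma (3/4) / Gamma (5/4)"
    using mult_left_cancel[of "sqrt pi" "sqrt pi * Ic 0" "Gamma (3/4) / Gamma (5/4)"] by simp
  moreover have nz: "sqrt pi \<noteq> 0" by simp
  moreover have g: "Gamma (5/4 :: real) > 0" by (rule Gamma_real_pos) simp
  ultimately have "Ic 0 * (sqrt pi * Gamma (5/4)) = Gamma (3/4)" by (simp add: field_simps)
  moreover have "Gamma (5/4 :: real) \<noteq> 0" using g by linarith
  then have "sqrt pi * Gamma (5/4) \<noteq> 0" using nz by simp
  ultimately show ?thesis by (simp add: eq_divide_eq)
qed

lemma Ic_formula: "Ic m = - (Gamma (real m - 1/4) / Gamma (real m + 5/4)) / (4 * sqrt pi)"
proof (induction m)
  case 0
  have "Gamma (3/4 :: real) = (-1/4) * Gamma (-1/4)"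
    using Gamma_plus1[OF not_npi(1)[of 0]] by simp
  then have h2: "Gamma (- (1/4) :: real) = - 4 * Gamma (3/4)" by simp
  have g: "Gamma (5/4 :: real) > 0" by (rule Gamma_real_pos) simp
  then have g': "Gamma (5/4 :: real) \<noteq> 0" by linarith
  show ?case using Ic0 g' by (simp add: h2 field_simps)
next
  case (Suc m)
  have p: "real m + 5/4 > 0" using of_nat_0_le_iff[of m] by linarith
  have "Ic (Suc m) = Ic m * ((real m - 1/4) / (real m + 5/4))"
    using Ic_rec[of m] p by (simp add: field_simps)
  then show ?case unfolding R_rec using Suc.IH by (simp add: field_simps)
qed

lemma parti:
  fixes j k :: nat
  shows "hN (1/4) j k =
           1 / (2 * sqrt (2 * pi)) *
             (Gamma (real (j + k) - 1/4) / Gamma (real (j + k) + 5/4)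
              - Gamma (\<bar>real j - real k\<bar> - 1/4) / Gamma (\<bar>real j - real k\<bar> + 5/4))"
proof -
  define m where "m = nat \<bar>int j - int k\<bar>"
  define M where "M = j + k"
  have mm: "\<bar>real j - real k\<bar> = real m" unfolding m_def by auto
  define R where "R n = Gamma (real n - 1/4) / Gamma (real n + 5/4)" for n :: nat
  have pw: "sin (pi * x / 2) powr (2 * (1/4)) * sin (real j * pi * x) * sin (real k * pi * x)
     = 1/2 * (sqrt (sin (pi * x / 2)) * cos (real m * pi * x)) - 1/2 * (sqrt (sin (pi * x / 2)) * cos (real M * pi * x))"
    if x: "x \<in> {0..1}" for x
  proof -
    have "sin (pi * x / 2) \<ge> 0" using x by (intro sin_ge_zero) auto
    then have e1: "sin (pi * x / 2) powr (2 * (1/4)) = sqrt (sin (pi * x / 2))"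
      by (simp add: powr_half_sqrt)
    have e2: "sin (real j * pi * x) * sin (real k * pi * x) = (cos (real m * pi * x) - cos (real M * pi * x)) / 2"
      using prod_sin[of x j k] x unfolding m_def M_def by simp
    have "sin (pi * x / 2) powr (2 * (1/4)) * sin (real j * pi * x) * sin (real k * pi * x)
       = sqrt (sin (pi * x / 2)) * (sin (real j * pi * x) * sin (real k * pi * x))"
      unfolding e1 by (simp only: mult.assoc)
    also have "\<dots> = sqrt (sin (pi * x / 2)) * ((cos (real m * pi * x) - cos (real M * pi * x)) / 2)"
      unfolding e2 ..
    also have "\<dots> = 1/2 * (sqrt (sin (pi * x / 2)) * cos (real m * pi * x)) - 1/2 * (sqrt (sin (pi * x / 2)) * cos (real M * pi * x))"
      by (simp add: field_simps)
    finally show ?thesis .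
  qed
  have a: "((\<lambda>x. sqrt (sin (pi * x / 2)) * cos (real n * pi * x)) has_integral Ic n) {0..1}" for n
    unfolding Ic_def using integrable_Ic by (rule integrable_integral)
  have "((\<lambda>x. 1/2 * (sqrt (sin (pi * x / 2)) * cos (real m * pi * x)) - 1/2 * (sqrt (sin (pi * x / 2)) * cos (real M * pi * x)))
     has_integral (1/2 * Ic m - 1/2 * Ic M)) {0..1}"
    by (intro has_integral_diff has_integral_mult_right a)
  then have I: "integral {0..1} (\<lambda>x. sin (pi * x / 2) powr (2 * (1/4)) * sin (real j * pi * x) * sin (real k * pi * x))
      = 1/2 * Ic m - 1/2 * Ic M"
    by (subst integral_cong[OF pw]) (auto simp: integral_unique)
  have p: "(2::real) powr (1 + 2 * (1/4)) = 2 * sqrt 2"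
  proof -
    have "(2::real) powr (1 + 1/2) = 2 powr 1 * 2 powr (1/2)" by (rule powr_add)
    moreover have "(1::real) + 2 * (1/4) = 1 + 1/2" by simp
    ultimately show ?thesis by (simp add: powr_half_sqrt)
  qed
  have "hN (1/4) j k = sqrt 2 * (Ic m - Ic M)" unfolding hN_def I p by (simp add: algebra_simps)
  also have "\<dots> = sqrt 2 / (4 * sqrt pi) * (R M - R m)"
    unfolding Ic_formula R_def by (simp add: field_simps)
  also have "sqrt 2 / (4 * sqrt pi) = 1 / (2 * sqrt (2 * pi))"
  proof -
    have "sqrt 2 * sqrt 2 = (2::real)" by simp
    then show ?thesis by (simp add: real_sqrt_mult field_simps)
  qed
  finally show ?thesis unfolding R_def mm M_def by simp
qed

theorem lemmaB1:
  fixes n j k :: nat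
  assumes "j \<in> {1..n}" and "k \<in> {1..n}"
  shows "(hN (1/4) j k =
           1 / (2 * sqrt (2 * pi)) *
             (Gamma (real (j + k) - 1/4) / Gamma (real (j + k) + 5/4)
              - Gamma (\<bar>real j - real k\<bar> - 1/4) / Gamma (\<bar>real j - real k\<bar> + 5/4))) \<and>
         (hN (-1/2) j k =
           1 / pi * (Digamma (real (j + k) + 1/2) - Digamma (\<bar>real j - real k\<bar> + 1/2))) \<and>
         (1 / pi * (Digamma (real (j + k) + 1/2) - Digamma (\<bar>real j - real k\<bar> + 1/2)) =
           1 / pi * (\<Sum>l = nat \<bar>int j - int k\<bar> + 1 .. j + k. 2 / (2 * real l - 1)))"
proof -
  have j: "j \<ge> 1" and k: "k \<ge> 1" using assms by auto
  define m where "m = nat \<bar>int j - int k\<bar>"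
  define d where "d = 2 * min j k"
  have Md: "j + k = m + d" unfolding m_def d_def by auto
  have mm: "\<bar>real j - real k\<bar> = real m" unfolding m_def by auto
  have D: "Digamma (real (j + k) + 1/2) - Digamma (\<bar>real j - real k\<bar> + 1/2)
      = (\<Sum>l = nat \<bar>int j - int k\<bar> + 1 .. j + k. 2 / (2 * real l - 1))"
    unfolding mm Md m_def[symmetric] by (rule digamma_sum)
  show ?thesis using parti[of j k] partii[OF j k] D by simp
qed

end
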